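(* Let $\gamma \in (0,1/6]$, let $n \geq 2$ be an integer, and let $\eta \geq \eta_1 := \max\{n, \frac{32}{\gamma^2}\log(3/\gamma)\}$. Then there exists a dataset $x_1,\dots,x_n$ (in $\mathbb{R}^d$ for some $d$) with $\|x_i\|\le 1$ for all $i$, linearly separable with maximum margin $\gamma$, such that gradient descent with step size $\eta$ on this dataset satisfies $F(w_t) > 2/\eta$ for all integers $0 \le t \leq 1 + \frac{1}{59\gamma^2}$.
   Context: All labels are $+1$. Linear separability: some $w$ has $\langle w,x_i\rangle>0$ for all $i$. Maximum margin: $\max_{\|w\|=1}\min_i\langle w,x_i\rangle$. Loss $F(w) = \frac{1}{n}\sum_{i=1}^n \log(1+\exp(-\langle w, x_i\rangle))$. Gradient descent with constant step size $\eta$: $w_0 = 0$, $w_{t+1} = w_t - \eta\nabla F(w_t)$. *)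

theory Defs
  imports "HOL-Analysis.Analysis"
begin

text \<open>Vectors in R^d are represented as functions nat => real; only the
  coordinates j < d matter. A dataset of n points is x :: nat => (nat => real),
  with points x 0, ..., x (n-1). All labels are +1.\<close>

definition ip :: "nat \<Rightarrow> (nat \<Rightarrow> real) \<Rightarrow> (nat \<Rightarrow> real) \<Rightarrow> real" where
  "ip d u v = (\<Sum>j<d. u j * v j)"

definition vnorm :: "nat \<Rightarrow> (nat \<Rightarrow> real) \<Rightarrow> real" where
  "vnorm d u = sqrt (ip d u u)"

definition logloss :: "nat \<Rightarrow> nat \<Rightarrow> (nat \<Rightarrow> nat \<Rightarrow> real) \<Rightarrow> (nat \<Rightarrow> real) \<Rightarrow> real" where
  "logloss d n x w = (1 / real n) * (\<Sum>i<n. ln (1 + exp (- ip d w (x i))))"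

definition logloss_grad :: "nat \<Rightarrow> nat \<Rightarrow> (nat \<Rightarrow> nat \<Rightarrow> real) \<Rightarrow> (nat \<Rightarrow> real) \<Rightarrow> (nat \<Rightarrow> real)" where
  "logloss_grad d n x w = (\<lambda>j. if j < d then
      - (1 / real n) * (\<Sum>i<n. x i j * (exp (- ip d w (x i)) / (1 + exp (- ip d w (x i)))))
    else 0)"

fun gd :: "nat \<Rightarrow> nat \<Rightarrow> (nat \<Rightarrow> nat \<Rightarrow> real) \<Rightarrow> real \<Rightarrow> nat \<Rightarrow> (nat \<Rightarrow> real)" where
  "gd d n x eta 0 = (\<lambda>j. 0)"
| "gd d n x eta (Suc t) = (\<lambda>j. gd d n x eta t j - eta * logloss_grad d n x (gd d n x eta t) j)"

definition lin_separable :: "nat \<Rightarrow> nat \<Rightarrow> (nat \<Rightarrow> nat \<Rightarrow> real) \<Rightarrow> bool" where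
  "lin_separable d n x \<longleftrightarrow> (\<exists>w. \<forall>i<n. ip d w (x i) > 0)"

text \<open>Maximum margin: max over unit w of min_i <w,x_i> (written as a supremum;
  the maximum is attained by compactness of the unit sphere).\<close>
definition max_margin :: "nat \<Rightarrow> nat \<Rightarrow> (nat \<Rightarrow> nat \<Rightarrow> real) \<Rightarrow> real" where
  "max_margin d n x = (SUP w\<in>{w. vnorm d w = 1}. Min ((\<lambda>i. ip d w (x i)) ` {..<n}))"

end

theory Submission
  imports Defs
begin

definition sigm :: "real \<Rightarrow> real" where "sigm m = exp (-m) / (1 + exp (-m))"

lemma sigm_ge0: "0 \<le> sigm m" unfolding sigm_def by (simp add: add_pos_pos)
lemma sigm_le1: "sigm m \<le> 1" unfolding sigm_def by (simp add: add_pos_pos)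
lemma sigm_0: "sigm 0 = 1/2" unfolding sigm_def by simp

lemma sigm_small: assumes "L \<le> m" shows "sigm m \<le> exp (-L)"
proof -
  have "sigm m \<le> exp (-m)" unfolding sigm_def
    by (simp add: divide_le_eq add_pos_pos)
  also have "\<dots> \<le> exp (-L)" using assms by simp
  finally show ?thesis .
qed

lemma sigm_big: assumes "m \<le> -L" shows "1 - exp (-L) \<le> sigm m"
proof -
  have e: "0 < exp (-m)" by simp
  have ne: "1 + exp (-m) \<noteq> 0" using e by linarith
  have "1 - sigm m = 1 / (1 + exp (-m))" unfolding sigm_def using ne
    by (simp add: field_simps)
  also have "\<dots> \<le> exp m"
  proof -
    have "1 \<le> exp m * (1 + exp (-m))" by (simp add: distrib_left exp_minus field_simps)
    then show ?thesis using e by (simp add: divide_le_eq add_pos_pos)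
  qed
  also have "\<dots> \<le> exp (-L)" using assms by simp
  finally show ?thesis by simp
qed

locale dyn =
  fixes g eta p w3 c1 c2 eps :: real and U V :: "nat \<Rightarrow> real"
  assumes g0: "0 < g" and g1: "g \<le> 1/6" and p1: "1/3 \<le> p" and w0: "0 \<le> w3"
    and wp: "w3 \<le> p" and psum: "2*p + w3 = 1"
    and eta0: "0 < eta" and eps_def: "eps = exp (-(eta*g^2/12))" and epsb: "eps \<le> g^2/12"
    and L2: "2 \<le> eta*g^2/12"
    and c1: "c1 = 1/2 + 8*g^2" and c2: "c2 = 1/2"
    and U0: "U 0 = 0" and V0: "V 0 = 0"
    and US: "\<And>t. U (Suc t) = U t + eta*g*(p* sigm (g*U t + c1*V t) + p* sigm (g*U t - c2*V t) + w3* sigm (g*U t))"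
    and VS: "\<And>t. V (Suc t) = V t + eta*p*(c1* sigm (g*U t + c1*V t) - c2* sigm (g*U t - c2*V t))"
begin

definition Inv where "Inv t \<longleftrightarrow> eta*g^2/3 \<le> g*U t \<and> g*U t \<le> eta*g^2*(p*real t + w3/2 + real t*eps)
  \<and> (odd t \<longrightarrow> \<bar>V t - eta*p*4*g^2*real t\<bar> \<le> 2*eta*p*real t*eps)
  \<and> (even t \<longrightarrow> \<bar>V t - (eta*p*4*g^2*(real t - 1) - eta*p/2)\<bar> \<le> 2*eta*p*real t*eps)"

lemma eps0: "0 < eps" using eps_def by simp
lemma g2: "g^2 \<le> 1/36"
proof -
  have "g^2 \<le> (1/6)^2" using g0 g1 by (intro power_mono) auto
  thus ?thesis by (simp add: power2_eq_square)
qed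

lemma sat_odd:
  assumes I: "Inv t" and t1: "1 \<le> t" and od: "odd t"
  shows "eta*g^2/12 \<le> g*U t + c1*V t \<and> g*U t - c2*V t \<le> -(eta*g^2/12)"
proof -
  define r where "r = real t"
  have r1: "1 \<le> r" using t1 r_def by simp
  have Vlo: "V t \<ge> eta*p*4*g^2*r - 2*eta*p*r*eps" using I od unfolding Inv_def r_def by (simp add: abs_le_iff)
  have Uhi: "g*U t \<le> eta*g^2*(p*r + w3/2 + r*eps)" using I unfolding Inv_def r_def by simp
  have Ulo: "eta*g^2/3 \<le> g*U t" using I unfolding Inv_def by simp
  have ep: "0 < eta*p" using eta0 p1 by simp
  have "eta*p*4*g^2*r - 2*eta*p*r*eps = (eta*p*r)*(4*g^2 - 2*eps)" by (simp add: algebra_simps)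
  also have "\<dots> \<ge> (eta*p*r)*(3*g^2)"
  proof -
    have "4*g^2 - 2*eps \<ge> 3*g^2" using epsb eps0 by linarith
    thus ?thesis using ep r1 by (intro mult_left_mono) auto
  qed
  finally have V3: "V t \<ge> eta*p*r*(3*g^2)" using Vlo by linarith
  have "p*r \<ge> p*1" using p1 r1 by (intro mult_left_mono) auto
  hence "3*(p*r) \<ge> 1" using p1 by linarith
  hence "eta*g^2*(3*(p*r)) \<ge> eta*g^2*1" using eta0 g0 by (intro mult_left_mono) auto
  hence V4: "V t \<ge> eta*g^2" using V3 by (simp add: algebra_simps)
  have eg: "0 < eta*g^2" using eta0 g0 by simp
  have "c1*V t \<ge> (1/2)*V t" using c1 V4 eg
    by (intro mult_right_mono) auto
  moreover have "0 \<le> g*U t" using Ulo eg by linarith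
  ultimately have m1: "g*U t + c1*V t \<ge> eta*g^2/2" using V4 by linarith
  have "g*U t - c2*V t \<le> eta*g^2*(p*r + w3/2 + r*eps) - (1/2)*(eta*p*4*g^2*r - 2*eta*p*r*eps)"
  proof -
    have gen: "\<And>a b x y::real. a \<le> x \<Longrightarrow> y \<le> b \<Longrightarrow> a - 1/2*b \<le> x - 1/2*y" by linarith
    show ?thesis unfolding c2 by (rule gen[OF Uhi Vlo])
  qed
  also have "\<dots> = eta*g^2*(w3/2 - p*r) + (eta*r)*(eps*(g^2+p))" by (simp add: algebra_simps)
  also have "\<dots> \<le> eta*g^2*(-r/6) + (eta*r)*(g^2/12)"
  proof (rule add_mono)
    have "w3/2 - p*r \<le> -r/6"
    proof -
      have "p*r \<ge> p" using r1 p1 by simp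
      moreover have "p*r \<ge> r/3" using p1 r1 by (simp add: mult_right_mono)
      ultimately show ?thesis using wp by linarith
    qed
    thus "eta*g^2*(w3/2 - p*r) \<le> eta*g^2*(-r/6)" using eta0 by (intro mult_left_mono) auto
    have "p \<le> 1/2" using psum w0 by linarith
    hence "g^2 + p \<le> 1" using g2 by linarith
    hence "eps*(g^2+p) \<le> eps" using eps0 by (simp add: mult_left_le)
    hence "eps*(g^2+p) \<le> g^2/12" using epsb by linarith
    thus "(eta*r)*(eps*(g^2+p)) \<le> (eta*r)*(g^2/12)" using eta0 r1 by (intro mult_left_mono) auto
  qed
  also have "\<dots> = -(eta*g^2*r/12)" by (simp add: algebra_simps)
  also have "\<dots> \<le> -(eta*g^2/12)" using r1 eta0 g0 by simp
  finally have "g*U t - c2*V t \<le> -(eta*g^2/12)" .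
  thus ?thesis using m1 eg by linarith
qed

lemma sat_even:
  assumes I: "Inv t" and t1: "1 \<le> t" and ev: "even t" and tT: "real t \<le> 1 + 1/(59*g^2)"
  shows "g*U t + c1*V t \<le> -(eta*g^2/12) \<and> eta*g^2/12 \<le> g*U t - c2*V t"
proof -
  define r where "r = real t"
  have r1: "1 \<le> r" using t1 r_def by simp
  have Vhi: "V t \<le> eta*p*4*g^2*(r - 1) - eta*p/2 + 2*eta*p*r*eps" using I ev unfolding Inv_def r_def by (simp add: abs_le_iff)
  have Uhi: "g*U t \<le> eta*g^2*(p*r + w3/2 + r*eps)" using I unfolding Inv_def r_def by simp
  have Ulo: "eta*g^2/3 \<le> g*U t" using I unfolding Inv_def by simp
  have ep: "0 < eta*p" using eta0 p1 by simp
  have eg: "0 < eta*g^2" using eta0 g0 by simp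
  have gg: "0 < g^2" using g0 by simp
  define q where "q = g^2*(r-1)"
  have q0: "0 \<le> q" unfolding q_def using r1 by simp
  have q1: "q \<le> 1/59"
  proof -
    have "r - 1 \<le> 1/(59*g^2)" using tT r_def by simp
    hence "g^2*(r-1) \<le> g^2*(1/(59*g^2))" using gg by (intro mult_left_mono) auto
    thus ?thesis unfolding q_def using gg by simp
  qed
  define ee where "ee = r*eps"
  have ee0: "0 \<le> ee" unfolding ee_def using r1 eps0 by simp
  have ee1: "ee \<le> q/12 + g^2/12"
  proof -
    have "r*eps \<le> r*(g^2/12)" using epsb r1 by (intro mult_left_mono) auto
    moreover have "r*(g^2/12) = g^2*(r-1)/12 + g^2/12" by (simp add: field_simps)
    ultimately show ?thesis unfolding ee_def q_def by linarith
  qed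
  have ee2: "ee \<le> 1/200" using ee1 q1 g2 by linarith
  have "V t \<le> eta*p*(4*q - 1/2 + 2*ee)" using Vhi unfolding q_def ee_def by (simp add: algebra_simps)
  also have "\<dots> \<le> eta*p*(-2/5)" using q1 ee2 ep by (intro mult_left_mono) auto
  finally have V5: "V t \<le> -(eta*p*2/5)" by simp
  have "p \<le> 1/2" using psum w0 by linarith
  have B1: "p*(q+g^2) \<le> p*(1/20)" using q1 g2 p1 by (intro mult_left_mono) auto
  have B2: "g^2*w3 \<le> (1/36)*p" using g2 wp w0 by (intro mult_mono) auto
  have B3: "g^2*ee \<le> (1/36)*(1/200)" using g2 ee2 ee0 by (intro mult_mono) auto
  hence B3: "g^2*ee \<le> 1/7200" by simp
  have B: "p*(q+g^2) + g^2*w3/2 + g^2*ee \<le> p/10" 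
  proof -
    show ?thesis using B1 B2 B3 p1 by linarith
  qed
  have "g*U t \<le> eta*(p*(q+g^2) + g^2*w3/2 + g^2*ee)" using Uhi unfolding q_def ee_def by (simp add: algebra_simps)
  also have "\<dots> \<le> eta*(p/10)" using B eta0 by (intro mult_left_mono) auto
  finally have U5: "g*U t \<le> eta*p/10" by simp
  have Vneg: "V t \<le> 0" using V5 ep by linarith
  have "c1*V t \<le> (1/2)*V t" using c1 Vneg gg by (intro mult_right_mono_neg) auto
  hence m1: "g*U t + c1*V t \<le> -(eta*p/10)" using U5 V5 by linarith
  have "eta*g^2 \<le> eta*(1/36)" using g2 eta0 by (intro mult_left_mono) auto
  hence "eta*g^2 \<le> eta/36" by simp
  moreover have "eta*(1/3) \<le> eta*p" using p1 eta0 by (intro mult_left_mono) auto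
  hence "eta/3 \<le> eta*p" by simp
  ultimately have "eta*g^2/12 \<le> eta*p/10" using eta0 by linarith
  moreover have "0 \<le> g*U t" using Ulo eg by linarith
  ultimately show ?thesis using m1 V5 ep unfolding c2 by linarith
qed

lemma step:
  assumes I: "Inv t" and t1: "1 \<le> t" and tT: "real (Suc t) \<le> 1 + 1/(59*g^2)"
  shows "Inv (Suc t)"
proof -
  define r where "r = real t"
  have r1: "1 \<le> r" using t1 r_def by simp
  have tT': "real t \<le> 1 + 1/(59*g^2)" using tT by simp
  have ep: "0 < eta*p" using eta0 p1 by simp
  have eg: "0 < eta*g^2" using eta0 g0 by simp
  have Uhi: "g*U t \<le> eta*g^2*(p*r + w3/2 + r*eps)" using I unfolding Inv_def r_def by simp
  have Ulo: "eta*g^2/3 \<le> g*U t" using I unfolding Inv_def by simp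
  define a where "a = sigm (g*U t + c1*V t)"
  define b where "b = sigm (g*U t - c2*V t)"
  define c where "c = sigm (g*U t)"
  have a01: "0 \<le> a" "a \<le> 1" unfolding a_def by (auto simp: sigm_ge0 sigm_le1)
  have b01: "0 \<le> b" "b \<le> 1" unfolding b_def by (auto simp: sigm_ge0 sigm_le1)
  have c01: "0 \<le> c" "c \<le> eps" unfolding c_def eps_def using Ulo eg
    by (auto simp: sigm_ge0 intro!: sigm_small)
  have Un: "g*U (Suc t) = g*U t + eta*g^2*(p*a + p*b + w3*c)"
    unfolding US a_def b_def c_def by (simp add: algebra_simps power2_eq_square)
  have Vn: "V (Suc t) = V t + eta*p*(c1*a - c2*b)"
    unfolding VS a_def b_def by simp
  have pw: "p + w3 \<le> 1" using psum p1 by linarith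
  have sum_lo: "0 \<le> p*a + p*b + w3*c" using a01 b01 c01 p1 w0 by simp
  have cases_ab: "(a \<le> eps \<and> 1 - eps \<le> b) \<or> (1 - eps \<le> a \<and> b \<le> eps)"
  proof (cases "odd t")
    case True
    then have "eta*g^2/12 \<le> g*U t + c1*V t \<and> g*U t - c2*V t \<le> -(eta*g^2/12)"
      using sat_odd I t1 by blast
    then show ?thesis unfolding a_def b_def eps_def by (auto intro!: sigm_small sigm_big)
  next
    case False
    then have "g*U t + c1*V t \<le> -(eta*g^2/12) \<and> eta*g^2/12 \<le> g*U t - c2*V t"
      using sat_even I t1 tT' by blast
    then show ?thesis unfolding a_def b_def eps_def by (auto intro!: sigm_small sigm_big)
  qed
  have "a + b \<le> 1 + eps" using cases_ab a01 b01 by linarith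
  hence "p*(a+b) \<le> p*(1+eps)" using p1 by (intro mult_left_mono) auto
  moreover have "w3*c \<le> w3*eps" using c01 w0 by (intro mult_left_mono) auto
  moreover have "(p + w3)*eps \<le> 1*eps" using pw eps0 by (intro mult_right_mono) auto
  ultimately have sum_hi: "p*a + p*b + w3*c \<le> p + eps" by (simp add: algebra_simps)
  have "0 \<le> eta*g^2*(p*a + p*b + w3*c)" using eg sum_lo by simp
  hence U1: "eta*g^2/3 \<le> g*U (Suc t)" using Un Ulo by linarith
  have "g*U (Suc t) \<le> eta*g^2*(p*r + w3/2 + r*eps) + eta*g^2*(p + eps)"
  proof -
    have "eta*g^2*(p*a + p*b + w3*c) \<le> eta*g^2*(p + eps)" using sum_hi eg by (intro mult_left_mono) auto
    thus ?thesis using Un Uhi by linarith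
  qed
  also have "\<dots> = eta*g^2*(p*real (Suc t) + w3/2 + real (Suc t)*eps)"
    unfolding r_def by (simp add: algebra_simps)
  finally have U2: "g*U (Suc t) \<le> eta*g^2*(p*real (Suc t) + w3/2 + real (Suc t)*eps)" .
  have c1le: "c1 \<le> 1" "1/2 \<le> c1" using c1 g2 by auto
  show ?thesis
  proof (cases "odd t")
    case True
    have Vt: "\<bar>V t - eta*p*4*g^2*r\<bar> \<le> 2*eta*p*r*eps" using I True unfolding Inv_def r_def by simp
    have ab: "a \<le> eps" "1 - eps \<le> b"
    proof -
      have "eta*g^2/12 \<le> g*U t + c1*V t \<and> g*U t - c2*V t \<le> -(eta*g^2/12)"
        using sat_odd I t1 True by blast
      then show "a \<le> eps" "1 - eps \<le> b" unfolding a_def b_def eps_def by (auto intro!: sigm_small sigm_big)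
    qed
    have "c1*a \<le> 1*eps" using c1le ab a01 by (intro mult_mono) auto
    moreover have "0 \<le> c1*a" using c1le a01 by simp
    ultimately have k: "0 \<le> c1*a - c2*b + 1/2 \<and> c1*a - c2*b + 1/2 \<le> 2*eps"
      using ab a01 b01 eps0 unfolding c2 by linarith
    have k2: "0 \<le> eta*p*(c1*a - c2*b + 1/2) \<and> eta*p*(c1*a - c2*b + 1/2) \<le> eta*p*(2*eps)"
      using k ep by (auto intro: mult_left_mono)
    have "V (Suc t) - (eta*p*4*g^2*(real (Suc t) - 1) - eta*p/2)
        = (V t - eta*p*4*g^2*r) + eta*p*(c1*a - c2*b + 1/2)"
      unfolding Vn r_def by (simp add: algebra_simps)
    hence "\<bar>V (Suc t) - (eta*p*4*g^2*(real (Suc t) - 1) - eta*p/2)\<bar> \<le> 2*eta*p*r*eps + eta*p*(2*eps)"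
      using Vt k2 by linarith
    also have "\<dots> = 2*eta*p*real (Suc t)*eps" unfolding r_def by (simp add: algebra_simps)
    finally show ?thesis using True U1 U2 unfolding Inv_def by simp
  next
    case False
    have Vt: "\<bar>V t - (eta*p*4*g^2*(r - 1) - eta*p/2)\<bar> \<le> 2*eta*p*r*eps" using I False unfolding Inv_def r_def by simp
    have ab: "1 - eps \<le> a" "b \<le> eps"
    proof -
      have "g*U t + c1*V t \<le> -(eta*g^2/12) \<and> eta*g^2/12 \<le> g*U t - c2*V t"
        using sat_even I t1 tT' False by blast
      then show "1 - eps \<le> a" "b \<le> eps" unfolding a_def b_def eps_def by (auto intro!: sigm_small sigm_big)
    qed
    have "c1*(1-a) \<le> 1*eps" using c1le ab a01 by (intro mult_mono) auto
    moreover have "0 \<le> c1*(1-a)" using c1le a01 by simp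
    ultimately have k: "-(2*eps) \<le> c1*a - c2*b - c1 \<and> c1*a - c2*b - c1 \<le> 0"
      using ab a01 b01 eps0 unfolding c2 by (simp add: algebra_simps)
    have k2: "-(eta*p*(2*eps)) \<le> eta*p*(c1*a - c2*b - c1) \<and> eta*p*(c1*a - c2*b - c1) \<le> 0"
    proof
      have "eta*p*(-(2*eps)) \<le> eta*p*(c1*a - c2*b - c1)" using k ep by (intro mult_left_mono) auto
      thus "-(eta*p*(2*eps)) \<le> eta*p*(c1*a - c2*b - c1)" by simp
      show "eta*p*(c1*a - c2*b - c1) \<le> 0" using k ep by (simp add: mult_nonneg_nonpos)
    qed
    have "V (Suc t) - eta*p*4*g^2*real (Suc t)
        = (V t - (eta*p*4*g^2*(r - 1) - eta*p/2)) + eta*p*(c1*a - c2*b - c1)"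
      unfolding Vn r_def c1 by (simp add: algebra_simps)
    hence "\<bar>V (Suc t) - eta*p*4*g^2*real (Suc t)\<bar> \<le> 2*eta*p*r*eps + eta*p*(2*eps)"
      using Vt k2 by linarith
    also have "\<dots> = 2*eta*p*real (Suc t)*eps" unfolding r_def by (simp add: algebra_simps)
    finally show ?thesis using False U1 U2 unfolding Inv_def by simp
  qed
qed

lemma base: "Inv 1"
proof -
  have U1: "U 1 = eta*g*(p + w3/2)" using US[of 0] unfolding U0 V0 by (simp add: sigm_0 algebra_simps)
  have V1: "V 1 = eta*p*4*g^2" using VS[of 0] unfolding U0 V0 c1 c2 by (simp add: sigm_0 algebra_simps)
  have gU: "g*U 1 = eta*g^2*(p + w3/2)" unfolding U1 by (simp add: power2_eq_square algebra_simps)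
  have eg: "0 < eta*g^2" using eta0 g0 by simp
  have "eta*g^2*(1/3) \<le> eta*g^2*(p + w3/2)" using eg p1 w0 by (intro mult_left_mono) auto
  moreover have "eta*g^2*(p + w3/2) \<le> eta*g^2*(p + w3/2 + eps)" using eg eps0 by (intro mult_left_mono) auto
  moreover have "0 \<le> 2*eta*p*eps" using eta0 p1 eps0 by simp
  ultimately show ?thesis unfolding Inv_def using gU V1 by simp
qed

lemma inv_all: "1 \<le> t \<Longrightarrow> real t \<le> 1 + 1/(59*g^2) \<Longrightarrow> Inv t"
proof (induction t)
  case 0 then show ?case by simp
next
  case (Suc t)
  show ?case
  proof (cases "t = 0")
    case True then show ?thesis using base by simp
  next
    case False
    then have "1 \<le> t" by simp
    moreover have "real t \<le> 1 + 1/(59*g^2)" using Suc.prems by simp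
    ultimately show ?thesis using Suc.IH step Suc.prems by blast
  qed
qed

lemma final:
  assumes "1 \<le> t" "real t \<le> 1 + 1/(59*g^2)"
  shows "(odd t \<longrightarrow> g*U t - c2*V t \<le> -2) \<and> (even t \<longrightarrow> g*U t + c1*V t \<le> -2)"
  using sat_odd[OF inv_all[OF assms] assms(1)] sat_even[OF inv_all[OF assms] assms(1) _ assms(2)] L2
  by force

end

lemma ip2: "ip 2 u v = u 0 * v 0 + u 1 * v 1"
  unfolding ip_def by (simp add: numeral_2_eq_2)

lemma sum3:
  fixes A B C :: real
  assumes "2*k \<le> n"
  shows "(\<Sum>i<n. (if i < k then A else if i < 2*k then B else C)) = real k * A + real k * B + real (n - 2*k) * C"
proof -
  let ?h = "\<lambda>i. (if i < k then A else if i < 2*k then B else C)"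
  have e1: "(\<Sum>i<n. ?h i) = (\<Sum>i\<in>{0..<n}. ?h i)" by (simp add: atLeast0LessThan)
  have e2: "(\<Sum>i\<in>{0..<n}. ?h i) = (\<Sum>i\<in>{0..<2*k}. ?h i) + (\<Sum>i\<in>{2*k..<n}. ?h i)"
    by (rule sum.atLeastLessThan_concat[symmetric]) (use assms in auto)
  have e3: "(\<Sum>i\<in>{0..<2*k}. ?h i) = (\<Sum>i\<in>{0..<k}. ?h i) + (\<Sum>i\<in>{k..<2*k}. ?h i)"
    by (rule sum.atLeastLessThan_concat[symmetric]) auto
  have a: "(\<Sum>i\<in>{0..<k}. ?h i) = (\<Sum>i\<in>{0..<k}. A)" by (rule sum.cong) auto
  have b: "(\<Sum>i\<in>{k..<2*k}. ?h i) = (\<Sum>i\<in>{k..<2*k}. B)" by (rule sum.cong) auto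
  have c: "(\<Sum>i\<in>{2*k..<n}. ?h i) = (\<Sum>i\<in>{2*k..<n}. C)" by (rule sum.cong) auto
  show ?thesis unfolding e1 e2 e3 a b c using assms by (simp add: of_nat_diff)
qed

theorem lemma12:
  fixes \<gamma> \<eta> :: real and n :: nat
  assumes "0 < \<gamma>" and "\<gamma> \<le> 1/6"
    and "n \<ge> 2"
    and "\<eta> \<ge> max (real n) (32 / \<gamma>^2 * ln (3 / \<gamma>))"
  shows "\<exists>(d::nat) (x::nat \<Rightarrow> nat \<Rightarrow> real).
           (\<forall>i<n. vnorm d (x i) \<le> 1) \<and>
           lin_separable d n x \<and> max_margin d n x = \<gamma> \<and>
           (\<forall>t::nat. real t \<le> 1 + 1 / (59 * \<gamma>^2) \<longrightarrow>
              logloss d n x (gd d n x \<eta> t) > 2 / \<eta>)"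
proof -
  note g0 = assms(1) and g1 = assms(2) and n2 = assms(3)
  have etan: "real n \<le> \<eta>" and eta32: "32 / \<gamma>^2 * ln (3 / \<gamma>) \<le> \<eta>" using assms(4) by auto
  have gg: "0 < \<gamma>^2" using g0 by simp
  have g2: "\<gamma>^2 \<le> 1/36"
  proof -
    have "\<gamma>^2 \<le> (1/6)^2" using g0 g1 by (intro power_mono) auto
    thus ?thesis by (simp add: power2_eq_square)
  qed
  have l2: "2 \<le> ln (3/\<gamma>)"
  proof -
    have "exp (2::real) = exp 1 * exp 1" by (simp add: exp_add[symmetric])
    also have "\<dots> \<le> (272/100) * (272/100)" using e_less_272 by (intro mult_mono) auto
    also have "\<dots> \<le> 3/\<gamma>"
    proof -
      have "18 \<le> 3/\<gamma>" using g0 g1 by (simp add: field_simps)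
      thus ?thesis by simp
    qed
    finally show ?thesis using g0 by (subst ln_ge_iff) auto
  qed
  have eg32: "32 * ln (3/\<gamma>) \<le> \<eta>*\<gamma>^2"
  proof -
    have "32 / \<gamma>^2 * ln (3 / \<gamma>) * \<gamma>^2 \<le> \<eta> * \<gamma>^2" using eta32 gg by (intro mult_right_mono) auto
    thus ?thesis using gg by simp
  qed
  have l43: "ln (4/3::real) \<le> 1/3" using ln_le_minus_one[of "4/3::real"] by simp
  have lnkey: "ln (12/\<gamma>^2) = 2*ln (3/\<gamma>) + ln (4/3)"
  proof -
    have "12/\<gamma>^2 = (3/\<gamma>)^2 * (4/3)" using g0 by (simp add: field_simps power2_eq_square)
    hence "ln (12/\<gamma>^2) = ln ((3/\<gamma>)^2 * (4/3))" by (simp only:)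
    also have "\<dots> = ln ((3/\<gamma>)^2) + ln (4/3)" using g0 by (intro ln_mult_pos) auto
    finally have "ln (12/\<gamma>^2) = ln ((3/\<gamma>)^2) + ln (4/3)" .
    thus ?thesis by (simp add: ln_realpow)
  qed
  define eps where "eps = exp (-(\<eta>*\<gamma>^2/12))"
  have Lge: "ln (12/\<gamma>^2) \<le> \<eta>*\<gamma>^2/12" using lnkey l43 l2 eg32 by linarith
  have epsb: "eps \<le> \<gamma>^2/12"
  proof -
    have "eps \<le> exp (- ln (12/\<gamma>^2))" unfolding eps_def using Lge by simp
    also have "\<dots> = \<gamma>^2/12" using gg by (simp add: exp_minus exp_ln)
    finally show ?thesis .
  qed
  have L2: "2 \<le> \<eta>*\<gamma>^2/12" using l2 eg32 by linarith
  have eta0: "0 < \<eta>" using etan n2 by simp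
  define k where "k = n div 2"
  have k1: "1 \<le> k" using n2 unfolding k_def by simp
  have k2: "2*k \<le> n" unfolding k_def by simp
  have k3: "n \<le> 2*k + 1" unfolding k_def by simp
  define c1 where "c1 = 1/2 + 8*\<gamma>^2"
  define x1 where "x1 = (\<lambda>j::nat. if j = 0 then \<gamma> else if j = 1 then c1 else (0::real))"
  define x2 where "x2 = (\<lambda>j::nat. if j = 0 then \<gamma> else if j = 1 then -(1/2) else (0::real))"
  define x3 where "x3 = (\<lambda>j::nat. if j = 0 then \<gamma> else (0::real))"
  define x where "x = (\<lambda>i::nat. if i < k then x1 else if i < 2*k then x2 else x3)"
  define p where "p = real k / real n"
  define w3 where "w3 = real (n - 2*k) / real n"
  have np: "0 < real n" using n2 by simp
  have sumx: "(\<Sum>i<n. G (x i)) = real k * G x1 + real k * G x2 + real (n-2*k) * G x3" for G :: "(nat \<Rightarrow> real) \<Rightarrow> real"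
  proof -
    have "(\<Sum>i<n. G (x i)) = (\<Sum>i<n. if i<k then G x1 else if i < 2*k then G x2 else G x3)"
      by (rule sum.cong) (auto simp: x_def)
    also have "\<dots> = real k * G x1 + real k * G x2 + real (n-2*k) * G x3" by (rule sum3[OF k2])
    finally show ?thesis .
  qed
  have xv: "x1 0 = \<gamma>" "x1 1 = c1" "x2 0 = \<gamma>" "x2 1 = -(1/2)" "x3 0 = \<gamma>" "x3 1 = 0" "x1 (Suc 0) = c1" "x2 (Suc 0) = -(1/2)" "x3 (Suc 0) = 0"
    unfolding x1_def x2_def x3_def by auto
  have ipx1: "ip 2 w x1 = \<gamma>*w 0 + c1*w 1" for w unfolding ip2 x1_def by simp
  have ipx2: "ip 2 w x2 = \<gamma>*w 0 - 1/2*w 1" for w unfolding ip2 x2_def by simp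
  have ipx3: "ip 2 w x3 = \<gamma>*w 0" for w unfolding ip2 x3_def by simp
  have grad0: "logloss_grad 2 n x w 0 = -(\<gamma>*(p* sigm (\<gamma>*w 0 + c1*w 1) + p* sigm (\<gamma>*w 0 - 1/2*w 1) + w3* sigm (\<gamma>*w 0)))" for w
  proof -
    have "logloss_grad 2 n x w 0 = -(1/real n) * (\<Sum>i<n. (\<lambda>y. y 0 * sigm (ip 2 w y)) (x i))"
      by (simp add: logloss_grad_def sigm_def)
    also have "\<dots> = -(1/real n) * (real k * (\<gamma> * sigm (\<gamma>*w 0 + c1*w 1)) + real k * (\<gamma> * sigm (\<gamma>*w 0 - 1/2*w 1)) + real (n-2*k) * (\<gamma> * sigm (\<gamma>*w 0)))"
      using sumx[of "\<lambda>y. y 0 * sigm (ip 2 w y)"] by (simp add: ipx1 ipx2 ipx3 xv)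
    also have "\<dots> = -(\<gamma>*(p* sigm (\<gamma>*w 0 + c1*w 1) + p* sigm (\<gamma>*w 0 - 1/2*w 1) + w3* sigm (\<gamma>*w 0)))"
      unfolding p_def w3_def using np by (simp add: field_simps)
    finally show ?thesis .
  qed
  have grad1: "logloss_grad 2 n x w 1 = -(p*(c1* sigm (\<gamma>*w 0 + c1*w 1) - 1/2* sigm (\<gamma>*w 0 - 1/2*w 1)))" for w
  proof -
    have "logloss_grad 2 n x w 1 = -(1/real n) * (\<Sum>i<n. (\<lambda>y. y 1 * sigm (ip 2 w y)) (x i))"
      by (simp add: logloss_grad_def sigm_def)
    also have "\<dots> = -(1/real n) * (real k * (c1 * sigm (\<gamma>*w 0 + c1*w 1)) + real k * (-(1/2) * sigm (\<gamma>*w 0 - 1/2*w 1)))"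
      using sumx[of "\<lambda>y. y 1 * sigm (ip 2 w y)"] by (simp add: ipx1 ipx2 ipx3 xv)
    also have "\<dots> = -(p*(c1* sigm (\<gamma>*w 0 + c1*w 1) - 1/2* sigm (\<gamma>*w 0 - 1/2*w 1)))"
      unfolding p_def using np by (simp add: field_simps)
    finally show ?thesis .
  qed
  define U where "U t = gd 2 n x \<eta> t 0" for t
  define V where "V t = gd 2 n x \<eta> t 1" for t
  have US: "U (Suc t) = U t + \<eta>*\<gamma>*(p* sigm (\<gamma>*U t + c1*V t) + p* sigm (\<gamma>*U t - 1/2*V t) + w3* sigm (\<gamma>*U t))" for t
    unfolding U_def V_def by (simp add: grad0)
  have VS: "V (Suc t) = V t + \<eta>*p*(c1* sigm (\<gamma>*U t + c1*V t) - 1/2* sigm (\<gamma>*U t - 1/2*V t))" for t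
    unfolding U_def V_def by (simp add: grad1[simplified] algebra_simps)
  have p1: "1/3 \<le> p" unfolding p_def using np k1 k3 by (simp add: field_simps)
  have w0: "0 \<le> w3" unfolding w3_def by simp
  have wp: "w3 \<le> p" unfolding w3_def p_def using np k1 k3 by (simp add: divide_right_mono)
  have psum: "2*p + w3 = 1" unfolding w3_def p_def using np k2 by (simp add: field_simps of_nat_diff)
  interpret D: dyn \<gamma> \<eta> p w3 c1 "1/2" eps U V
    by (unfold_locales) (use g0 g1 p1 w0 wp psum eta0 eps_def epsb L2 c1_def US VS in \<open>auto simp: U_def V_def\<close>)
  have c1b: "0 \<le> c1" "c1 \<le> 13/18" unfolding c1_def using g2 gg by auto
  have xin: "x i \<in> {x1, x2, x3}" for i unfolding x_def by auto
  have x0: "x 0 = x1" unfolding x_def using k1 by simp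
  have xk: "x k = x2" unfolding x_def using k1 by simp
  have norms: "\<forall>i<n. vnorm 2 (x i) \<le> 1"
  proof (intro allI impI)
    fix i assume "i < n"
    have "ip 2 y y \<le> 1" if "y \<in> {x1, x2, x3}" for y
    proof -
      have gsq: "\<gamma>*\<gamma> \<le> 1/36" using g2 by (simp add: power2_eq_square)
      have "c1*c1 \<le> (13/18)*(13/18)" using c1b by (intro mult_mono) auto
      then show ?thesis using that gsq unfolding ip2 by (auto simp: xv)
    qed
    then show "vnorm 2 (x i) \<le> 1" unfolding vnorm_def using xin[of i] by simp
  qed
  define e0 where "e0 = (\<lambda>j::nat. if j = 0 then (1::real) else 0)"
  have xi0: "x i 0 = \<gamma>" for i unfolding x_def using xv by simp
  have ipe0: "ip 2 e0 (x i) = \<gamma>" for i using xi0[of i] unfolding ip2 e0_def by simp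
  have sep: "lin_separable 2 n x" unfolding lin_separable_def by (intro exI[of _ e0]) (simp add: ipe0 g0)
  have mm: "max_margin 2 n x = \<gamma>"
    unfolding max_margin_def
  proof (rule cSup_eq_maximum)
    have e0n: "vnorm 2 e0 = 1" unfolding vnorm_def ip2 e0_def by simp
    have "(\<lambda>i. ip 2 e0 (x i)) ` {..<n} = {\<gamma>}"
    proof -
      have "{..<n} \<noteq> {}" 
      proof -
        have "0 \<in> {..<n}" using n2 by simp
        thus ?thesis by blast
      qed
      thus ?thesis using ipe0 by (simp add: image_constant_conv)
    qed
    hence "Min ((\<lambda>i. ip 2 e0 (x i)) ` {..<n}) = \<gamma>" by simp
    thus "\<gamma> \<in> (\<lambda>w. Min ((\<lambda>i. ip 2 w (x i)) ` {..<n})) ` {w. vnorm 2 w = 1}"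
      using e0n by (metis (mono_tags, lifting) image_eqI mem_Collect_eq)
  next
    fix z assume "z \<in> (\<lambda>w. Min ((\<lambda>i. ip 2 w (x i)) ` {..<n})) ` {w. vnorm 2 w = 1}"
    then obtain w where wn: "vnorm 2 w = 1" and z: "z = Min ((\<lambda>i. ip 2 w (x i)) ` {..<n})" by auto
    have "w 0 * w 0 + w 1 * w 1 = 1" using wn unfolding vnorm_def ip2 by simp
    hence "w 0 ^ 2 \<le> 1" by (simp add: power2_eq_square) (smt (verit) zero_le_square)
    hence w01: "w 0 \<le> 1" by (simp add: abs_square_le_1)
    have kn: "k < n" using k1 k2 by linarith
    have fin: "finite ((\<lambda>i. ip 2 w (x i)) ` {..<n})" by simp
    have memA: "ip 2 w (x 0) \<in> (\<lambda>i. ip 2 w (x i)) ` {..<n}" using kn by auto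
    have memB: "ip 2 w (x k) \<in> (\<lambda>i. ip 2 w (x i)) ` {..<n}" using kn by auto
    have zA: "z \<le> \<gamma>*w 0 + c1*w 1" using Min_le[OF fin memA] z ipx1[of w] x0 by simp
    have zB: "z \<le> \<gamma>*w 0 - 1/2*w 1" using Min_le[OF fin memB] z ipx2[of w] xk by simp
    have "z \<le> \<gamma>*w 0"
    proof (cases "0 \<le> w 1")
      case True thus ?thesis using zB by linarith
    next
      case False
      hence "c1*w 1 \<le> 0" using c1b by (simp add: mult_nonneg_nonpos)
      thus ?thesis using zA by linarith
    qed
    also have "\<gamma>*w 0 \<le> \<gamma>*1" using w01 g0 by (intro mult_left_mono) auto
    finally show "z \<le> \<gamma>" by simp
  qed
  have eta864: "8 \<le> \<eta>"
  proof -
    have "24 \<le> \<eta>*\<gamma>^2" using L2 by linarith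
    also have "\<dots> \<le> \<eta>*(1/36)" using g2 eta0 by (intro mult_left_mono) auto
    finally show ?thesis by simp
  qed
  have lossb: "2/\<eta> < logloss 2 n x w" if i: "i < n" and m: "ip 2 w (x i) \<le> -2" for w i
  proof -
    let ?f = "\<lambda>i. ln (1 + exp (- ip 2 w (x i)))"
    have "-(ip 2 w (x i)) = ln (exp (- ip 2 w (x i)))" by simp
    also have "\<dots> < ?f i" by (subst ln_less_cancel_iff) (simp_all add: add_pos_pos)
    finally have fi: "2 < ?f i" using m by linarith
    have "?f i \<le> sum ?f {..<n}"
      by (rule member_le_sum) (use i in auto)
    hence "2 < sum ?f {..<n}" using fi by linarith
    hence "2 / real n < sum ?f {..<n} / real n" using np by (simp add: divide_strict_right_mono)
    moreover have "2/\<eta> \<le> 2/real n" using etan np by (simp add: frac_le)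
    ultimately show ?thesis unfolding logloss_def by simp
  qed
  have loss: "2/\<eta> < logloss 2 n x (gd 2 n x \<eta> t)" if tT: "real t \<le> 1 + 1/(59*\<gamma>^2)" for t
  proof (cases "t = 0")
    case True
    have l2h: "1/2 \<le> ln (2::real)"
    proof -
      have "ln (1/2::real) \<le> 1/2 - 1" by (rule ln_le_minus_one) auto
      thus ?thesis by (simp add: ln_div)
    qed
    have "logloss 2 n x (gd 2 n x \<eta> t) = ln 2" using True np unfolding logloss_def by (simp add: ip_def)
    moreover have "2/\<eta> < 1/2" using eta864 by (simp add: field_simps)
    ultimately show ?thesis using l2h by linarith
  next
    case False
    hence t1: "1 \<le> t" by simp
    have ipU: "ip 2 (gd 2 n x \<eta> t) x1 = \<gamma>*U t + c1*V t" "ip 2 (gd 2 n x \<eta> t) x2 = \<gamma>*U t - 1/2*V t"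
      unfolding ipx1 ipx2 U_def V_def by simp_all
    show ?thesis
    proof (cases "odd t")
      case True
      hence "\<gamma>*U t - 1/2*V t \<le> -2" using D.final[OF t1 tT] by blast
      thus ?thesis using lossb[of k] k1 k2 xk ipU by simp
    next
      case False
      hence "\<gamma>*U t + c1*V t \<le> -2" using D.final[OF t1 tT] by blast
      thus ?thesis using lossb[of 0] n2 x0 ipU by simp
    qed
  qed
  show ?thesis using norms sep mm loss by blast
qed

end
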